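(* Let $\mathcal{M}$, $\mathcal{Z}$, $\mathcal{T}$ be finite sets with $|\mathcal{T}|\ge 2$. Let $\mathcal{F}$ be a family of hash functions from $\mathcal{M}$ to $\mathcal{Z}$, let $\mathcal{H}$ be an SU$_2$ family of hash functions from $\mathcal{Z}$ to $\mathcal{T}$, and let $\mathcal{G}:=\mathcal{H}\circ\mathcal{F}$ be their element-wise composition. Let $\epsilon'\ge 0$ and $\epsilon=\epsilon'(1-1/|\mathcal{T}|)+1/|\mathcal{T}|$. Then $\mathcal{G}$ is $\epsilon$-ASU$_2$ if and only if $\mathcal{F}$ is $\epsilon'$-AU$_2$.
   Context: Hash function families are finite families (multisets indexed by keys) of functions. Element-wise composition: $\mathcal{H}\circ\mathcal{F}$ is the family $(h\circ f)_{(h,f)\in\mathcal{H}\times\mathcal{F}}$, so $|\mathcal{G}|=|\mathcal{H}||\mathcal{F}|$, counted with multiplicity. A family $\mathcal{F}$ of functions $\mathcal{M}\to\mathcal{Z}$ is $\epsilon'$-Almost Universal$_2$ ($\epsilon'$-AU$_2$) if for any two distinct $m_1,m_2\in\mathcal{M}$, the number of $f\in\mathcal{F}$ with $f(m_1)=f(m_2)$ is at most $\epsilon'|\mathcal{F}|$. A family $\mathcal{G}$ of functions $\mathcal{M}\to\mathcal{T}$ is $\epsilon$-Almost Strongly Universal$_2$ ($\epsilon$-ASU$_2$) if (a) for every $m_1\in\mathcal{M}$ and $t_1\in\mathcal{T}$, the number of $g\in\mathcal{G}$ with $g(m_1)=t_1$ is exactly $|\mathcal{G}|/|\mathcal{T}|$;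 and (b) for all distinct $m_1,m_2\in\mathcal{M}$ and all $t_1,t_2\in\mathcal{T}$ (possibly equal), among those $g$ with $g(m_1)=t_1$, the fraction that also satisfy $g(m_2)=t_2$ is at most $\epsilon$, i.e. $|\{g: g(m_1)=t_1, g(m_2)=t_2\}|\le \epsilon|\mathcal{G}|/|\mathcal{T}|$. The family is Strongly Universal$_2$ (SU$_2$) if it is $\epsilon$-ASU$_2$ with $\epsilon=1/|\mathcal{T}|$. *)

theory Defs
  imports Complex_Main
begin

text \<open>A hash function family is a finite set of keys K together with an indexing
  function F assigning to each key a function. Sizes are counted over keys,
  i.e. with multiplicity.\<close>

definition AU2 :: "real \<Rightarrow> 'k set \<Rightarrow> ('k \<Rightarrow> 'm \<Rightarrow> 'z) \<Rightarrow> bool" where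
  "AU2 eps K F \<longleftrightarrow>
     (\<forall>m1 m2. m1 \<noteq> m2 \<longrightarrow> real (card {k\<in>K. F k m1 = F k m2}) \<le> eps * real (card K))"

definition ASU2 :: "real \<Rightarrow> 'k set \<Rightarrow> ('k \<Rightarrow> 'm \<Rightarrow> 't::finite) \<Rightarrow> bool" where
  "ASU2 eps K G \<longleftrightarrow>
     (\<forall>m1 t1. real (card {k\<in>K. G k m1 = t1}) = real (card K) / real (card (UNIV :: 't set))) \<and>
     (\<forall>m1 m2 t1 t2. m1 \<noteq> m2 \<longrightarrow>
        real (card {k\<in>K. G k m1 = t1 \<and> G k m2 = t2}) \<le> eps * real (card K) / real (card (UNIV :: 't set)))"

definition SU2 :: "'k set \<Rightarrow> ('k \<Rightarrow> 'm \<Rightarrow> 't::finite) \<Rightarrow> bool" where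
  "SU2 K G \<longleftrightarrow> ASU2 (1 / real (card (UNIV :: 't set))) K G"

definition comp_keys :: "'a set \<Rightarrow> 'b set \<Rightarrow> ('a \<times> 'b) set" where
  "comp_keys KH KF = KH \<times> KF"

definition comp_fam :: "('a \<Rightarrow> 'z \<Rightarrow> 't) \<Rightarrow> ('b \<Rightarrow> 'm \<Rightarrow> 'z) \<Rightarrow> ('a \<times> 'b \<Rightarrow> 'm \<Rightarrow> 't)" where
  "comp_fam H F = (\<lambda>(a, b). H a \<circ> F b)"

end

theory Submission
  imports Defs
begin

lemma fib_card:
  assumes "finite S" "finite R" "g ` S \<subseteq> R"
  shows "real (card S) = (\<Sum>y\<in>R. real (card {x\<in>S. g x = y}))"
  using sum_fun_comp[OF assms, of "\<lambda>_. (1::real)"] by simp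

lemma SU2_exact:
  fixes H :: "'kh \<Rightarrow> 'z \<Rightarrow> 't::finite"
  assumes su: "SU2 KH H" and fin: "finite KH" and ne: "z1 \<noteq> z2"
  shows "real (card {a\<in>KH. H a z1 = t1 \<and> H a z2 = t2})
          = real (card KH) / real (card (UNIV :: 't set)) / real (card (UNIV :: 't set))"
proof -
  let ?T = "real (card (UNIV :: 't set))"
  let ?b = "real (card KH) / ?T / ?T"
  let ?f = "\<lambda>t. real (card {a\<in>KH. H a z1 = t1 \<and> H a z2 = t})"
  have Tpos: "?T > 0" by (simp add: finite_UNIV_card_ge_0)
  from su have a: "real (card {a\<in>KH. H a z1 = t1}) = real (card KH) / ?T"
    and b: "\<And>t. ?f t \<le> 1 / ?T * real (card KH) / ?T"
    unfolding SU2_def ASU2_def using ne by auto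
  have le: "\<And>t. ?f t \<le> ?b" using b by (simp add: field_simps)
  have "real (card {a\<in>KH. H a z1 = t1}) = (\<Sum>t\<in>UNIV. real (card {x\<in>{a\<in>KH. H a z1 = t1}. H x z2 = t}))"
    by (rule fib_card) (use fin in auto)
  also have "\<dots> = (\<Sum>t\<in>UNIV. ?f t)"
    by (intro sum.cong) (auto intro!: arg_cong[where f="\<lambda>S. real (card S)"])
  finally have s: "(\<Sum>t\<in>UNIV. ?f t) = real (card KH) / ?T" using a by simp
  have "(\<Sum>t\<in>UNIV. ?b - ?f t) = ?T * ?b - (\<Sum>t\<in>UNIV. ?f t)"
    by (simp add: sum_subtractf)
  also have "\<dots> = 0" using s Tpos by (simp add: field_simps)
  finally have "\<forall>t\<in>UNIV. ?b - ?f t = 0"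
    using sum_nonneg_eq_0_iff[of UNIV "\<lambda>t. ?b - ?f t"] le by simp
  then show ?thesis by simp
qed

lemma comp_count:
  assumes finH: "finite KH" and finF: "finite KF"
  shows "real (card {k\<in>comp_keys KH KF. P k})
       = (\<Sum>b\<in>KF. real (card {a\<in>KH. P (a, b)}))"
proof -
  have "real (card {k\<in>comp_keys KH KF. P k})
      = (\<Sum>b\<in>KF. real (card {x\<in>{k\<in>comp_keys KH KF. P k}. snd x = b}))"
    by (rule fib_card) (use finH finF in \<open>auto simp: comp_keys_def\<close>)
  also have "\<dots> = (\<Sum>b\<in>KF. real (card {a\<in>KH. P (a, b)}))"
  proof (rule sum.cong[OF refl])
    fix b assume "b \<in> KF"
    then have "{x\<in>{k\<in>comp_keys KH KF. P k}. snd x = b} = (\<lambda>a. (a, b)) ` {a\<in>KH. P (a, b)}"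
      by (auto simp: comp_keys_def)
    moreover have "inj_on (\<lambda>a. (a, b)) {a\<in>KH. P (a, b)}" by (auto simp: inj_on_def)
    ultimately show "real (card {x\<in>{k\<in>comp_keys KH KF. P k}. snd x = b}) = real (card {a\<in>KH. P (a, b)})"
      by (simp add: card_image)
  qed
  finally show ?thesis .
qed

theorem theorem1:
  fixes KF :: "'kf set" and F :: "'kf \<Rightarrow> 'm::finite \<Rightarrow> 'z::finite"
    and KH :: "'kh set" and H :: "'kh \<Rightarrow> 'z \<Rightarrow> 't::finite"
    and eps' eps :: real
  assumes "card (UNIV :: 't set) \<ge> 2"
    and "finite KF" and "KF \<noteq> {}"
    and "finite KH" and "KH \<noteq> {}"
    and "SU2 KH H"
    and "eps' \<ge> 0"
    and "eps = eps' * (1 - 1 / real (card (UNIV :: 't set))) + 1 / real (card (UNIV :: 't set))"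
  shows "ASU2 eps (comp_keys KH KF) (comp_fam H F) \<longleftrightarrow> AU2 eps' KF F"
proof -
  let ?T = "real (card (UNIV :: 't set))"
  let ?N = "real (card KH)"
  let ?n = "real (card KF)"
  note T2 = assms(1) and finF = assms(2) and finH = assms(4) and su = assms(6)
  have T2r: "?T \<ge> 2" using T2 by linarith
  have Npos: "?N > 0" using finH assms(5) by (simp add: card_gt_0_iff)
  have ncard: "real (card (comp_keys KH KF)) = ?N * ?n" by (simp add: comp_keys_def card_cartesian_product)
  have one: "real (card {a\<in>KH. H a z = t}) = ?N / ?T" for z t
    using su unfolding SU2_def ASU2_def by auto
  have pa: "real (card {k\<in>comp_keys KH KF. comp_fam H F k m1 = t1}) = real (card (comp_keys KH KF)) / ?T" for m1 t1
  proof -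
    have "real (card {k\<in>comp_keys KH KF. comp_fam H F k m1 = t1})
        = (\<Sum>b\<in>KF. real (card {a\<in>KH. H a (F b m1) = t1}))"
      by (subst comp_count[OF finH finF]) (simp add: comp_fam_def)
    also have "\<dots> = ?n * (?N / ?T)" by (simp add: one)
    finally show ?thesis using ncard by simp
  qed
  define c where "c m1 m2 = real (card {b\<in>KF. F b m1 = F b m2})" for m1 m2
  have pb: "real (card {k\<in>comp_keys KH KF. comp_fam H F k m1 = t1 \<and> comp_fam H F k m2 = t2})
      = c m1 m2 * (if t1 = t2 then ?N / ?T else 0) + (?n - c m1 m2) * (?N / ?T / ?T)" for m1 m2 t1 t2
  proof -
    have "real (card {k\<in>comp_keys KH KF. comp_fam H F k m1 = t1 \<and> comp_fam H F k m2 = t2})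
        = (\<Sum>b\<in>KF. real (card {a\<in>KH. H a (F b m1) = t1 \<and> H a (F b m2) = t2}))"
      by (subst comp_count[OF finH finF]) (simp add: comp_fam_def)
    also have "\<dots> = (\<Sum>b\<in>KF. if F b m1 = F b m2 then (if t1 = t2 then ?N / ?T else 0) else ?N / ?T / ?T)"
    proof (rule sum.cong[OF refl])
      fix b assume "b \<in> KF"
      show "real (card {a\<in>KH. H a (F b m1) = t1 \<and> H a (F b m2) = t2}) =
         (if F b m1 = F b m2 then (if t1 = t2 then ?N / ?T else 0) else ?N / ?T / ?T)"
      proof (cases "F b m1 = F b m2")
        case True
        show ?thesis
        proof (cases "t1 = t2")
          case True
          with \<open>F b m1 = F b m2\<close> show ?thesis using one[of "F b m2" t2] by simp
        next
          case False
          have "card {a\<in>KH. H a (F b m1) = t1 \<and> H a (F b m2) = t2} = 0"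
            using \<open>F b m1 = F b m2\<close> False by (auto simp: card_eq_0_iff)
          with False show ?thesis by (simp only: if_False if_True \<open>F b m1 = F b m2\<close> of_nat_0) simp
        qed
      next
        case False
        then show ?thesis using SU2_exact[OF su finH False] by simp
      qed
    qed
    also have "\<dots> = c m1 m2 * (if t1 = t2 then ?N / ?T else 0) + real (card (KF \<inter> - {b. F b m1 = F b m2})) * (?N / ?T / ?T)"
      by (subst sum.If_cases[OF finF]) (simp add: c_def Collect_conj_eq Int_commute)
    also have "card (KF \<inter> - {b. F b m1 = F b m2}) = card KF - card {b\<in>KF. F b m1 = F b m2}"
    proof -
      have "KF \<inter> - {b. F b m1 = F b m2} = KF - {b\<in>KF. F b m1 = F b m2}" by auto
      then show ?thesis using finF by (simp add: card_Diff_subset)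
    qed
    also have "real (card KF - card {b\<in>KF. F b m1 = F b m2}) = ?n - c m1 m2"
      unfolding c_def using finF by (simp add: card_mono of_nat_diff)
    finally show ?thesis .
  qed
  have cle: "c m1 m2 \<le> ?n" for m1 m2 unfolding c_def using finF by (simp add: card_mono)
  have c0: "c m1 m2 \<ge> 0" for m1 m2 unfolding c_def by simp
  have key: "c m1 m2 * (?N / ?T) + (?n - c m1 m2) * (?N / ?T / ?T) \<le> eps * (?N * ?n) / ?T
         \<longleftrightarrow> c m1 m2 \<le> eps' * ?n" for m1 m2
  proof -
    have "c m1 m2 * (?N / ?T) + (?n - c m1 m2) * (?N / ?T / ?T) \<le> eps * (?N * ?n) / ?T
       \<longleftrightarrow> (c m1 m2 * ?T + (?n - c m1 m2)) * ?N \<le> (eps * ?T) * ?n * ?N"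
    proof -
      have Tp: "?T * ?T > 0" using T2r by simp
      have e1: "c m1 m2 * (?N / ?T) + (?n - c m1 m2) * (?N / ?T / ?T) = ((c m1 m2 * ?T + (?n - c m1 m2)) * ?N) / (?T * ?T)"
        using T2r by (simp add: field_simps)
      have e2: "eps * (?N * ?n) / ?T = ((eps * ?T) * ?n * ?N) / (?T * ?T)"
        using T2r by (simp add: field_simps)
      show ?thesis unfolding e1 e2 using Tp by (subst divide_le_cancel) auto
    qed
    also have "\<dots> \<longleftrightarrow> c m1 m2 * ?T + (?n - c m1 m2) \<le> (eps * ?T) * ?n"
      using Npos by (simp add: mult.assoc)
    also have "eps * ?T = eps' * (?T - 1) + 1" using assms(8) T2r by (simp add: field_simps)
    also have "c m1 m2 * ?T + (?n - c m1 m2) \<le> (eps' * (?T - 1) + 1) * ?n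
           \<longleftrightarrow> c m1 m2 * (?T - 1) \<le> (eps' * ?n) * (?T - 1)"
      by (simp add: algebra_simps)
    also have "\<dots> \<longleftrightarrow> c m1 m2 \<le> eps' * ?n" using T2r by simp
    finally show ?thesis .
  qed
  have epsge: "eps \<ge> 1 / ?T"
  proof -
    have "eps' * (?T - 1) \<ge> 0" using assms(7) T2r by simp
    moreover have "eps * ?T = eps' * (?T - 1) + 1" using assms(8) T2r by (simp add: field_simps)
    ultimately have "eps * ?T \<ge> 1" by linarith
    then show ?thesis using T2r by (simp add: field_simps)
  qed
  show ?thesis
  proof
    assume A: "ASU2 eps (comp_keys KH KF) (comp_fam H F)"
    show "AU2 eps' KF F" unfolding AU2_def
    proof (intro allI impI)
      fix m1 m2 :: 'm assume "m1 \<noteq> m2"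
      with A have "real (card {k\<in>comp_keys KH KF. comp_fam H F k m1 = undefined \<and> comp_fam H F k m2 = undefined})
          \<le> eps * real (card (comp_keys KH KF)) / ?T" unfolding ASU2_def by blast
      then have "c m1 m2 \<le> eps' * ?n" using key pb ncard by simp
      then show "real (card {k\<in>KF. F k m1 = F k m2}) \<le> eps' * ?n" by (simp add: c_def)
    qed
  next
    assume A: "AU2 eps' KF F"
    show "ASU2 eps (comp_keys KH KF) (comp_fam H F)" unfolding ASU2_def
    proof (intro conjI allI impI)
      fix m1 t1 show "real (card {k\<in>comp_keys KH KF. comp_fam H F k m1 = t1}) = real (card (comp_keys KH KF)) / ?T"
        by (rule pa)
    next
      fix m1 m2 :: 'm and t1 t2 :: 't assume ne: "m1 \<noteq> m2"
      show "real (card {k\<in>comp_keys KH KF. comp_fam H F k m1 = t1 \<and> comp_fam H F k m2 = t2})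
          \<le> eps * real (card (comp_keys KH KF)) / ?T"
      proof (cases "t1 = t2")
        case True
        have "c m1 m2 \<le> eps' * ?n" using A ne unfolding AU2_def c_def by blast
        then show ?thesis using key pb ncard True by simp
      next
        case False
        have "(?n - c m1 m2) * (?N / ?T / ?T) \<le> ?n * (?N / ?T / ?T)"
          using c0 Npos T2r by (intro mult_right_mono) auto
        also have "\<dots> = (1 / ?T) * (?N * ?n) / ?T" by simp
        also have "\<dots> \<le> eps * (?N * ?n) / ?T"
          using epsge T2r Npos by (intro divide_right_mono mult_right_mono) auto
        finally show ?thesis using pb ncard False by simp
      qed
    qed
  qed
qed

end
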